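(* Let $k$ be a positive integer and let $M(2k)$ be the perfect matching derangement graph. Then: (1) $M(2k)$ is vertex transitive, and the natural action of $\mathrm{Sym}(2k)$ on perfect matchings (induced by permuting the vertices of $K_{2k}$) gives a subgroup of automorphisms of $M(2k)$ acting transitively on its vertices; (2) the maximum size of a clique in $M(2k)$ is $2k-1$; (3) the maximum size of a coclique (independent set) in $M(2k)$ is $(2k-3)!!$.
   Context: The perfect matching derangement graph $M(2k)$ has as vertices all perfect matchings of the complete graph $K_{2k}$ (sets of $k$ pairwise vertex-disjoint edges), two perfect matchings being adjacent if and only if they have no edge in common. For odd $n$, $n!!=n(n-2)\cdots1$, with $(-1)!!=1$. *)

theory Defs
  imports "HOL-Combinatorics.Permutations"
begin

definition edges_K :: "nat \<Rightarrow> nat set set" where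
  "edges_K n = {e. e \<subseteq> {0..<n} \<and> card e = 2}"

definition perfect_matchings :: "nat \<Rightarrow> nat set set set" where
  "perfect_matchings k = {M. M \<subseteq> edges_K (2*k) \<and> card M = k \<and>
      (\<forall>e\<in>M. \<forall>f\<in>M. e \<noteq> f \<longrightarrow> e \<inter> f = {})}"

definition pm_adj :: "nat set set \<Rightarrow> nat set set \<Rightarrow> bool" where
  "pm_adj M N \<longleftrightarrow> M \<inter> N = {}"

definition pm_clique :: "nat \<Rightarrow> nat set set set \<Rightarrow> bool" where
  "pm_clique k C \<longleftrightarrow> C \<subseteq> perfect_matchings k \<and>
     (\<forall>M\<in>C. \<forall>N\<in>C. M \<noteq> N \<longrightarrow> pm_adj M N)"

definition pm_coclique :: "nat \<Rightarrow> nat set set set \<Rightarrow> bool" where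
  "pm_coclique k C \<longleftrightarrow> C \<subseteq> perfect_matchings k \<and>
     (\<forall>M\<in>C. \<forall>N\<in>C. M \<noteq> N \<longrightarrow> \<not> pm_adj M N)"

definition pm_automorphism :: "nat \<Rightarrow> (nat set set \<Rightarrow> nat set set) \<Rightarrow> bool" where
  "pm_automorphism k f \<longleftrightarrow> bij_betw f (perfect_matchings k) (perfect_matchings k) \<and>
     (\<forall>M\<in>perfect_matchings k. \<forall>N\<in>perfect_matchings k. pm_adj M N \<longleftrightarrow> pm_adj (f M) (f N))"

definition vertex_transitive_pm :: "nat \<Rightarrow> bool" where
  "vertex_transitive_pm k \<longleftrightarrow> (\<forall>M\<in>perfect_matchings k. \<forall>N\<in>perfect_matchings k.
      \<exists>f. pm_automorphism k f \<and> f M = N)"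

definition pm_act :: "(nat \<Rightarrow> nat) \<Rightarrow> nat set set \<Rightarrow> nat set set" where
  "pm_act \<sigma> M = (\<lambda>e. \<sigma> ` e) ` M"

text \<open>Double factorial: n!! = n(n-2)...; dfact 0 = 1 so that (2k-3)!! with
  nat subtraction gives (-1)!! = 1 when k = 1.\<close>
fun dfact :: "nat \<Rightarrow> nat" where
  "dfact 0 = 1"
| "dfact (Suc 0) = 1"
| "dfact (Suc (Suc n)) = Suc (Suc n) * dfact n"

end

theory Submission
  imports Defs
begin


definition pmset :: "nat set \<Rightarrow> nat set set set" where
"pmset V = {M. (\<forall>e\<in>M. e \<subseteq> V \<and> card e = 2) \<and> (\<forall>e\<in>M. \<forall>f\<in>M. e \<noteq> f \<longrightarrow> e \<inter> f = {}) \<and> \<Union>M = V}"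

lemma fin2: "card e = 2 \<Longrightarrow> finite e"
  using card.infinite by fastforce

lemma pmset_finite: "finite V \<Longrightarrow> finite (pmset V)"
  by (rule finite_subset[of _ "Pow (Pow V)"]) (auto simp: pmset_def)

lemma pm_card: assumes "M \<in> pmset V" "finite V" shows "card V = 2 * card M"
proof -
  have "card (\<Union>M) = sum card M"
    by (rule card_Union_disjoint) (use assms in \<open>auto simp: pmset_def pairwise_def disjnt_def intro: fin2\<close>)
  also have "\<dots> = sum (\<lambda>_. 2) M" by (rule sum.cong) (use assms in \<open>auto simp: pmset_def\<close>)
  finally show ?thesis using assms by (simp add: pmset_def)
qed

lemma pm_eq: "perfect_matchings k = pmset {0..<2*k}"
proof (intro set_eqI iffI)
  fix M assume M: "M \<in> perfect_matchings k"
  have fin: "finite M"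
    by (rule finite_subset[of _ "Pow {0..<2*k}"]) (use M in \<open>auto simp: perfect_matchings_def edges_K_def\<close>)
  have "card (\<Union>M) = sum card M"
    by (rule card_Union_disjoint) (use M in \<open>auto simp: perfect_matchings_def edges_K_def pairwise_def disjnt_def intro: fin2\<close>)
  also have "\<dots> = sum (\<lambda>_. 2) M" by (rule sum.cong) (use M in \<open>auto simp: perfect_matchings_def edges_K_def\<close>)
  finally have "card (\<Union>M) = card {0..<2*k}" using M by (simp add: perfect_matchings_def)
  moreover have "\<Union>M \<subseteq> {0..<2*k}" using M by (auto simp: perfect_matchings_def edges_K_def)
  ultimately have "\<Union>M = {0..<2*k}" by (simp add: card_subset_eq)
  then show "M \<in> pmset {0..<2*k}" using M by (auto simp: perfect_matchings_def edges_K_def pmset_def)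
next
  fix M assume M: "M \<in> pmset {0..<2*k}"
  have "card {0..<2*k} = 2 * card M" by (rule pm_card[OF M]) simp
  then show "M \<in> perfect_matchings k" using M by (auto simp: perfect_matchings_def edges_K_def pmset_def)
qed

lemma pmset_empty: "pmset {} = {{}}"
  by (auto simp: pmset_def)

lemma pm_remove:
  assumes M: "M \<in> pmset V" and e: "e \<in> M"
  shows "M - {e} \<in> pmset (V - e)"
proof -
  have d: "\<And>f. f \<in> M - {e} \<Longrightarrow> f \<inter> e = {}" using M e by (auto simp: pmset_def)
  have a1: "\<forall>f\<in>M - {e}. f \<subseteq> V - e \<and> card f = 2"
    using M d by (auto simp: pmset_def)
  have a2: "\<forall>f\<in>M - {e}. \<forall>g\<in>M - {e}. f \<noteq> g \<longrightarrow> f \<inter> g = {}"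
    using M by (auto simp: pmset_def)
  have U: "\<Union>M = V" using M by (auto simp: pmset_def)
  have a3: "\<Union>(M - {e}) = V - e"
  proof
    show "\<Union>(M - {e}) \<subseteq> V - e" using a1 by auto
    show "V - e \<subseteq> \<Union>(M - {e})" using U by auto
  qed
  show ?thesis unfolding pmset_def using a1 a2 a3 by simp
qed

lemma pm_insert:
  assumes N: "N \<in> pmset (V - e)" and e: "e \<subseteq> V" "card e = 2"
  shows "insert e N \<in> pmset V" "e \<notin> N"
proof -
  have ne: "e \<noteq> {}" using e by auto
  have a1: "\<forall>f\<in>N. f \<subseteq> V - e \<and> card f = 2" using N by (simp add: pmset_def)
  have a2: "\<forall>f\<in>N. \<forall>g\<in>N. f \<noteq> g \<longrightarrow> f \<inter> g = {}" using N by (simp add: pmset_def)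
  have a3: "\<Union>N = V - e" using N by (simp add: pmset_def)
  show "e \<notin> N" using a1 ne by auto
  have b1: "\<forall>f\<in>insert e N. f \<subseteq> V \<and> card f = 2" using a1 e by auto
  have b2: "\<forall>f\<in>insert e N. \<forall>g\<in>insert e N. f \<noteq> g \<longrightarrow> f \<inter> g = {}"
    using a1 a2 by blast
  have b3: "\<Union>(insert e N) = V" using a3 e by auto
  show "insert e N \<in> pmset V" unfolding pmset_def using b1 b2 b3 by simp
qed

lemma dfact_step: "dfact (Suc (2*m)) = Suc (2*m) * dfact (2*m - 1)"
  by (cases m) auto

lemma pm_partner:
  assumes M: "M \<in> pmset V" and a: "a \<in> V"
  shows "\<exists>b\<in>V - {a}. {a,b} \<in> M"
proof -
  obtain e where e: "e \<in> M" "a \<in> e" using M a by (auto simp: pmset_def)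
  then obtain x y where "e = {x,y}" "x \<noteq> y" using M by (auto simp: pmset_def card_2_iff)
  moreover have "e \<subseteq> V" using M e by (auto simp: pmset_def)
  ultimately show ?thesis using e
    by (metis Diff_iff insert_commute insert_iff insert_subset singletonD)
qed

lemma pm_fiber_card:
  assumes "finite V" "a \<in> V" "b \<in> V" "a \<noteq> b"
  shows "card {M \<in> pmset V. {a,b} \<in> M} = card (pmset (V - {a,b}))"
proof -
  have "bij_betw (\<lambda>M. M - {{a,b}}) {M \<in> pmset V. {a,b} \<in> M} (pmset (V - {a,b}))"
  proof (rule bij_betw_byWitness[where f' = "insert {a,b}"])
    show "\<forall>M\<in>{M \<in> pmset V. {a, b} \<in> M}. insert {a, b} (M - {{a, b}}) = M" by auto
    show "\<forall>N\<in>pmset (V - {a, b}). insert {a, b} N - {{a, b}} = N"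
      using pm_insert(2)[of _ V "{a,b}"] assms by auto
    show "(\<lambda>M. M - {{a, b}}) ` {M \<in> pmset V. {a, b} \<in> M} \<subseteq> pmset (V - {a, b})"
      using pm_remove by auto
    show "insert {a, b} ` pmset (V - {a, b}) \<subseteq> {M \<in> pmset V. {a, b} \<in> M}"
      using pm_insert(1)[of _ V "{a,b}"] assms by auto
  qed
  then show ?thesis by (rule bij_betw_same_card)
qed

lemma pm_count: "finite V \<Longrightarrow> card V = 2*m \<Longrightarrow> card (pmset V) = dfact (2*m - 1)"
proof (induction m arbitrary: V)
  case 0
  then show ?case by (simp add: pmset_empty)
next
  case (Suc m)
  have "V \<noteq> {}" using Suc.prems(2) by auto
  then obtain a where a: "a \<in> V" by auto
  have eq: "pmset V = (\<Union>b\<in>V - {a}. {M \<in> pmset V. {a,b} \<in> M})"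
  proof
    show "pmset V \<subseteq> (\<Union>b\<in>V - {a}. {M \<in> pmset V. {a,b} \<in> M})"
    proof
      fix M assume M: "M \<in> pmset V"
      then obtain b where "b \<in> V - {a}" "{a,b} \<in> M" using pm_partner[OF M a] by blast
      then show "M \<in> (\<Union>b\<in>V - {a}. {M \<in> pmset V. {a,b} \<in> M})" using M by blast
    qed
    show "(\<Union>b\<in>V - {a}. {M \<in> pmset V. {a,b} \<in> M}) \<subseteq> pmset V" by auto
  qed
  have "card (pmset V) = card (\<Union>b\<in>V - {a}. {M \<in> pmset V. {a,b} \<in> M})"
    using eq by (rule arg_cong)
  also have "\<dots> = (\<Sum>b\<in>V - {a}. card {M \<in> pmset V. {a,b} \<in> M})"
  proof (rule card_UN_disjoint)
    show "finite (V - {a})" using Suc.prems(1) by simp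
    show "\<forall>i\<in>V - {a}. finite {M \<in> pmset V. {a, i} \<in> M}" using pmset_finite[OF Suc.prems(1)] by simp
    show "\<forall>i\<in>V - {a}. \<forall>j\<in>V - {a}. i \<noteq> j \<longrightarrow> {M \<in> pmset V. {a, i} \<in> M} \<inter> {M \<in> pmset V. {a, j} \<in> M} = {}"
    proof (intro ballI impI)
      fix i j assume ij: "i \<in> V - {a}" "j \<in> V - {a}" "i \<noteq> j"
      have "{a,i} \<noteq> {a,j}" using ij by (auto simp: doubleton_eq_iff)
      have "\<not> ({a,i} \<in> M \<and> {a,j} \<in> M)" if M: "M \<in> pmset V" for M
      proof
        assume h: "{a,i} \<in> M \<and> {a,j} \<in> M"
        have D: "\<forall>e\<in>M. \<forall>f\<in>M. e \<noteq> f \<longrightarrow> e \<inter> f = {}" using M by (simp add: pmset_def)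
        have i: "{a,i} \<in> M" and j: "{a,j} \<in> M" using h by simp_all
        have "{a,i} \<inter> {a,j} = {}" using D[rule_format, OF i j \<open>{a,i} \<noteq> {a,j}\<close>] .
        then show False by simp
      qed
      then show "{M \<in> pmset V. {a, i} \<in> M} \<inter> {M \<in> pmset V. {a, j} \<in> M} = {}"
        by blast
    qed
  qed
  also have "\<dots> = (\<Sum>b\<in>V - {a}. dfact (2*m - 1))"
  proof (rule sum.cong[OF refl])
    fix b assume b: "b \<in> V - {a}"
    have "card (V - {a,b}) = 2*m" using Suc.prems a b by (simp add: card_Diff_subset)
    have "card (pmset (V - {a,b})) = dfact (2*m - 1)" using Suc.IH[of "V - {a,b}"] Suc.prems(1) \<open>card (V - {a,b}) = 2*m\<close> by simp
    then show "card {M \<in> pmset V. {a,b} \<in> M} = dfact (2*m - 1)"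
      using pm_fiber_card[of V a b] Suc.prems(1) a b by simp
  qed
  also have "\<dots> = Suc (2*m) * dfact (2*m - 1)" using Suc.prems a by simp
  finally show ?case using dfact_step by simp
qed



lemma pm_act_comp: "pm_act (f \<circ> g) M = pm_act f (pm_act g M)"
  by (auto simp: pm_act_def image_comp)

lemma pm_act_id: "pm_act id M = M" by (simp add: pm_act_def)

lemma inj_img: "inj g \<Longrightarrow> inj ((`) g)"
  by (meson inj_image_eq_iff injI)

lemma pm_act_inj: "inj f \<Longrightarrow> inj (pm_act f)"
proof -
  assume f: "inj f"
  have "inj ((`) ((`) f))" by (rule inj_img[OF inj_img[OF f]])
  moreover have "pm_act f = (`) ((`) f)" by (rule ext) (simp only: pm_act_def)
  ultimately show ?thesis by simp
qed

lemma pm_act_Int: "inj f \<Longrightarrow> pm_act f M \<inter> pm_act f N = pm_act f (M \<inter> N)"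
proof -
  assume f: "inj f"
  have "inj ((`) f)" by (rule inj_img[OF f])
  then show ?thesis unfolding pm_act_def by (simp add: image_Int)
qed

lemma pm_act_mem:
  assumes p: "\<sigma> permutes V" and M: "M \<in> pmset V"
  shows "pm_act \<sigma> M \<in> pmset V"
proof -
  have inj: "inj \<sigma>" using p by (rule permutes_inj)
  have im: "\<sigma> ` V = V" using p by (rule permutes_image)
  have a1: "\<forall>e\<in>M. e \<subseteq> V \<and> card e = 2" using M by (simp add: pmset_def)
  have a2: "\<forall>e\<in>M. \<forall>f\<in>M. e \<noteq> f \<longrightarrow> e \<inter> f = {}" using M by (simp add: pmset_def)
  have a3: "\<Union>M = V" using M by (simp add: pmset_def)
  have b1: "\<forall>e\<in>pm_act \<sigma> M. e \<subseteq> V \<and> card e = 2"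
    using a1 im inj by (auto simp: pm_act_def card_image inj_on_subset)
  have b2: "\<forall>e\<in>pm_act \<sigma> M. \<forall>f\<in>pm_act \<sigma> M. e \<noteq> f \<longrightarrow> e \<inter> f = {}"
  proof (intro ballI impI)
    fix e f assume "e \<in> pm_act \<sigma> M" "f \<in> pm_act \<sigma> M" "e \<noteq> f"
    then obtain e' f' where "e' \<in> M" "f' \<in> M" "e = \<sigma> ` e'" "f = \<sigma> ` f'" "e' \<noteq> f'"
      by (auto simp: pm_act_def)
    then show "e \<inter> f = {}" using a2 inj by (simp add: image_Int[symmetric])
  qed
  have b3: "\<Union>(pm_act \<sigma> M) = V" using a3 im by (simp add: pm_act_def image_Union[symmetric])
  show ?thesis unfolding pmset_def using b1 b2 b3 by simp
qed

lemma pm_act_inv: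
  assumes p: "\<sigma> permutes V"
  shows "pm_act (inv \<sigma>) (pm_act \<sigma> M) = M" "pm_act \<sigma> (pm_act (inv \<sigma>) M) = M"
  using permutes_inv_o[OF p] by (simp_all add: pm_act_comp[symmetric] pm_act_id)

lemma pm_act_auto:
  assumes p: "\<sigma> permutes {0..<2*k}"
  shows "pm_automorphism k (pm_act \<sigma>)"
  unfolding pm_automorphism_def pm_eq
proof
  show "bij_betw (pm_act \<sigma>) (pmset {0..<2 * k}) (pmset {0..<2 * k})"
    by (rule bij_betw_byWitness[where f'="pm_act (inv \<sigma>)"])
       (use pm_act_inv[OF p] pm_act_mem[OF p] pm_act_mem[OF permutes_inv[OF p]] in auto)
  show "\<forall>M\<in>pmset {0..<2 * k}. \<forall>N\<in>pmset {0..<2 * k}. pm_adj M N = pm_adj (pm_act \<sigma> M) (pm_act \<sigma> N)"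
  proof (intro ballI)
    fix M N
    have e: "pm_act \<sigma> X = {} \<longleftrightarrow> X = {}" for X by (simp add: pm_act_def)
    show "pm_adj M N = pm_adj (pm_act \<sigma> M) (pm_act \<sigma> N)"
      unfolding pm_adj_def pm_act_Int[OF permutes_inj[OF p]] e ..
  qed
qed

lemma pm_nonempty_edge: "M \<in> pmset V \<Longrightarrow> V \<noteq> {} \<Longrightarrow> \<exists>a b. a \<noteq> b \<and> {a,b} \<in> M"
proof -
  assume M: "M \<in> pmset V" "V \<noteq> {}"
  then obtain e where "e \<in> M" by (auto simp: pmset_def)
  moreover have "card e = 2" using M calculation by (simp add: pmset_def)
  then obtain x y where "e = {x,y}" "x \<noteq> y" by (auto simp: card_2_iff)
  ultimately show ?thesis by blast
qed

lemma pm_trans_gen: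
  "finite V \<Longrightarrow> finite W \<Longrightarrow> card V = 2*m \<Longrightarrow> card W = 2*m \<Longrightarrow> M \<in> pmset V \<Longrightarrow> N \<in> pmset W
   \<Longrightarrow> \<exists>\<sigma>. \<sigma> ` V = W \<and> pm_act \<sigma> M = N"
proof (induction m arbitrary: V W M N)
  case 0
  then have "V = {}" "W = {}" by auto
  then show ?case using 0 pmset_empty by (auto simp: pm_act_def)
next
  case (Suc m)
  obtain a b where ab: "a \<noteq> b" "{a,b} \<in> M" using pm_nonempty_edge[OF Suc.prems(5)] Suc.prems(3) by fastforce
  obtain c d where cd: "c \<noteq> d" "{c,d} \<in> N" using pm_nonempty_edge[OF Suc.prems(6)] Suc.prems(4) by fastforce
  have abV: "{a,b} \<subseteq> V" using ab Suc.prems(5) by (auto simp: pmset_def)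
  have cdW: "{c,d} \<subseteq> W" using cd Suc.prems(6) by (auto simp: pmset_def)
  have M': "M - {{a,b}} \<in> pmset (V - {a,b})" by (rule pm_remove[OF Suc.prems(5) ab(2)])
  have N': "N - {{c,d}} \<in> pmset (W - {c,d})" by (rule pm_remove[OF Suc.prems(6) cd(2)])
  have cV: "card (V - {a,b}) = 2*m" using Suc.prems abV ab by (simp add: card_Diff_subset)
  have cW: "card (W - {c,d}) = 2*m" using Suc.prems cdW cd by (simp add: card_Diff_subset)
  obtain \<sigma> where s: "\<sigma> ` (V - {a,b}) = W - {c,d}" "pm_act \<sigma> (M - {{a,b}}) = N - {{c,d}}"
    using Suc.IH[OF _ _ cV cW M' N'] Suc.prems by auto
  define \<tau> where "\<tau> = \<sigma>(a := c, b := d)"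
  have agree: "\<And>x. x \<in> V - {a,b} \<Longrightarrow> \<tau> x = \<sigma> x" by (auto simp: \<tau>_def)
  have "V = insert a (insert b (V - {a,b}))" using abV by auto
  moreover have "\<tau> ` (V - {a,b}) = \<sigma> ` (V - {a,b})" using agree by (rule image_cong[OF refl])
  moreover have "\<tau> a = c" "\<tau> b = d" using ab by (auto simp: \<tau>_def)
  ultimately have "\<tau> ` V = insert c (insert d (\<sigma> ` (V - {a,b})))"
    by (metis image_insert)
  then have "\<tau> ` V = W" using s(1) cdW by auto
  moreover have "pm_act \<tau> M = N"
  proof -
    have "M = insert {a,b} (M - {{a,b}})" using ab by auto
    have e1: "pm_act \<tau> (M - {{a,b}}) = pm_act \<sigma> (M - {{a,b}})"
    proof -
      have "\<And>e. e \<in> M - {{a,b}} \<Longrightarrow> \<tau> ` e = \<sigma> ` e"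
        using M' agree by (intro image_cong) (auto simp: pmset_def)
      then show ?thesis unfolding pm_act_def by (rule image_cong[OF refl])
    qed
    have e2: "\<tau> ` {a,b} = {c,d}" using ab by (auto simp: \<tau>_def)
    have "pm_act \<tau> M = pm_act \<tau> (insert {a,b} (M - {{a,b}}))"
      using ab by (simp add: insert_absorb)
    also have "\<dots> = insert (\<tau> ` {a,b}) (pm_act \<tau> (M - {{a,b}}))"
      by (simp only: pm_act_def image_insert)
    also have "\<dots> = N" using e1 e2 s(2) cd by auto
    finally show ?thesis .
  qed
  ultimately show ?case by blast
qed

lemma pm_trans:
  assumes M: "M \<in> pmset V" and N: "N \<in> pmset V" and V: "finite V"
  shows "\<exists>\<sigma>. \<sigma> permutes V \<and> pm_act \<sigma> M = N"
proof -
  obtain m where m: "card V = 2*m" using pm_card[OF M V] by auto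
  obtain \<sigma> where s: "\<sigma> ` V = V" "pm_act \<sigma> M = N" using pm_trans_gen[OF V V m m M N] by auto
  define \<tau> where "\<tau> x = (if x \<in> V then \<sigma> x else x)" for x
  have "inj_on \<sigma> V" using s(1) V by (simp add: eq_card_imp_inj_on)
  moreover have "\<tau> ` V = \<sigma> ` V" by (rule image_cong) (auto simp: \<tau>_def)
  moreover have "inj_on \<tau> V = inj_on \<sigma> V" by (rule inj_on_cong) (auto simp: \<tau>_def)
  ultimately have "bij_betw \<tau> V V" using s(1) by (simp add: bij_betw_def)
  then have p: "\<tau> permutes V" by (rule bij_imp_permutes) (simp add: \<tau>_def)
  have "pm_act \<tau> M = pm_act \<sigma> M"
    unfolding pm_act_def
    by (rule image_cong[OF refl], rule image_cong[OF refl]) (use M in \<open>auto simp: pmset_def \<tau>_def\<close>)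
  then show ?thesis using p s by auto
qed



lemma odd_cancel:
  assumes "odd (n::nat)" "(2*a) mod int n = (2*b) mod int n"
  shows "a mod int n = b mod int n"
proof -
  have "int n dvd 2*a - 2*b" using assms(2) by (simp add: mod_eq_dvd_iff)
  then have "int n dvd 2*(a - b)" by (simp add: algebra_simps)
  moreover have "coprime (int n) 2" using assms(1) by simp
  ultimately have "int n dvd (a - b)" using coprime_dvd_mult_right_iff by blast
  then show ?thesis by (simp add: mod_eq_dvd_iff)
qed

definition rr :: "nat \<Rightarrow> nat \<Rightarrow> nat \<Rightarrow> nat" where
  "rr n i x = nat ((2*int i - int x) mod int n)"

lemma rr_int: "n > 0 \<Longrightarrow> int (rr n i x) = (2*int i - int x) mod int n"
  by (simp add: rr_def)

lemma rr_lt: "n > 0 \<Longrightarrow> rr n i x < n"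
  by (simp add: rr_def nat_less_iff)

lemma rr_rr: assumes "n > 0" "x < n" shows "rr n i (rr n i x) = x"
proof -
  have "int (rr n i (rr n i x)) = (2*int i - (2*int i - int x) mod int n) mod int n"
    using assms by (simp add: rr_int)
  also have "\<dots> = (2*int i - (2*int i - int x)) mod int n" by (simp add: mod_diff_right_eq)
  also have "\<dots> = int x" using assms by simp
  finally show ?thesis by simp
qed

lemma rr_sum: "n > 0 \<Longrightarrow> (int x + int (rr n i x)) mod int n = (2 * int i) mod int n"
proof -
  assume n: "n > 0"
  have "(int x + int (rr n i x)) mod int n = (int x + (2*int i - int x) mod int n) mod int n"
    using n by (simp add: rr_int)
  also have "\<dots> = (int x + (2*int i - int x)) mod int n" by (rule mod_add_right_eq)
  finally show ?thesis by simp
qed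

lemma rr_ne: assumes "odd n" "x < n" "i < n" "x \<noteq> i"
  shows "rr n i x \<noteq> x" "rr n i x \<noteq> i"
proof -
  have n: "n > 0" using assms by auto
  show "rr n i x \<noteq> x"
  proof
    assume h: "rr n i x = x"
    have "(2 * int x) mod int n = (2 * int i) mod int n" using rr_sum[OF n, of x i] h by (metis mult_2)
    then have "int x mod int n = int i mod int n" using odd_cancel assms(1) by blast
    then show False using assms by simp
  qed
  show "rr n i x \<noteq> i"
  proof
    assume "rr n i x = i"
    then have "(int x + int i) mod int n = (int i + int i) mod int n" using rr_sum[OF n, of x i] by (metis mult_2)
    then have "int n dvd (int x + int i) - (int i + int i)" by (simp only: mod_eq_dvd_iff)
    then have "int n dvd int x - int i" by (simp add: algebra_simps)
    then have "int x mod int n = int i mod int n" by (simp only: mod_eq_dvd_iff)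
    then show False using assms by simp
  qed
qed

definition F :: "nat \<Rightarrow> nat \<Rightarrow> nat set set" where
  "F n i = insert {i,n} ((\<lambda>x. {x, rr n i x}) ` ({..<n} - {i}))"

lemma F_pm:
  assumes "odd n" "i < n"
  shows "F n i \<in> pmset {0..<Suc n}"
proof -
  have n: "n > 0" using assms by auto
  have lt: "\<And>x. rr n i x < n" using rr_lt[OF n] by blast
  have c2: "\<And>x. x < n \<Longrightarrow> x \<noteq> i \<Longrightarrow> card {x, rr n i x} = 2"
    using rr_ne[OF assms(1) _ assms(2)] by fastforce
  have a1: "\<forall>e\<in>F n i. e \<subseteq> {0..<Suc n} \<and> card e = 2"
    using assms lt c2 less_Suc_eq by (auto simp: F_def)
  have a2: "\<forall>e\<in>F n i. \<forall>f\<in>F n i. e \<noteq> f \<longrightarrow> e \<inter> f = {}"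
  proof (intro ballI impI)
    fix e f assume e: "e \<in> F n i" and f: "f \<in> F n i" and ef: "e \<noteq> f"
    have edge: "{x, rr n i x} \<inter> {i,n} = {}" if x: "x < n" "x \<noteq> i" for x
    proof -
      have "rr n i x \<noteq> i" using rr_ne[OF assms(1) x(1) assms(2) x(2)] by blast
      moreover have "rr n i x \<noteq> n" using lt[of x] by simp
      ultimately show ?thesis using x by auto
    qed
    have edge2: "{x, rr n i x} = {y, rr n i y}" if xy: "x < n" "y < n" "{x, rr n i x} \<inter> {y, rr n i y} \<noteq> {}" for x y
    proof -
      have "x = y \<or> x = rr n i y \<or> rr n i x = y \<or> rr n i x = rr n i y" using xy(3) by auto
      then show ?thesis using rr_rr[OF n xy(1), of i] rr_rr[OF n xy(2), of i] by (metis insert_commute)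
    qed
    have ce: "e = {i,n} \<or> (\<exists>x. x < n \<and> x \<noteq> i \<and> e = {x, rr n i x})" using e by (auto simp: F_def)
    have cf: "f = {i,n} \<or> (\<exists>x. x < n \<and> x \<noteq> i \<and> f = {x, rr n i x})" using f by (auto simp: F_def)
    show "e \<inter> f = {}"
    proof (cases "e = {i,n}")
      case True
      then obtain y where "y < n" "y \<noteq> i" "f = {y, rr n i y}" using cf ef by blast
      then show ?thesis using True edge[of y] by (simp add: Int_commute)
    next
      case False
      then obtain x where x: "x < n" "x \<noteq> i" "e = {x, rr n i x}" using ce by blast
      show ?thesis
      proof (cases "f = {i,n}")
        case True
        then show ?thesis using x edge[of x] by simp
      next
        case False
        then obtain y where "y < n" "y \<noteq> i" "f = {y, rr n i y}" using cf by blast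
        then show ?thesis using x ef edge2[of x y] by blast
      qed
    qed
  qed
  have a3: "\<Union>(F n i) = {0..<Suc n}"
  proof
    show "\<Union>(F n i) \<subseteq> {0..<Suc n}" using a1 by auto
    show "{0..<Suc n} \<subseteq> \<Union>(F n i)"
    proof
      fix z assume z: "z \<in> {0..<Suc n}"
      show "z \<in> \<Union>(F n i)"
      proof (cases "z = n \<or> z = i")
        case True then show ?thesis by (auto simp: F_def)
      next
        case False
        then have "{z, rr n i z} \<in> F n i" using z by (auto simp: F_def)
        then show ?thesis by auto
      qed
    qed
  qed
  show ?thesis unfolding pmset_def using a1 a2 a3 by simp
qed

lemma F_disj:
  assumes "odd n" "i < n" "j < n" "i \<noteq> j"
  shows "F n i \<inter> F n j = {}"
proof -
  have n: "n > 0" using assms by auto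
  have "\<And>x y. x < n \<Longrightarrow> y < n \<Longrightarrow> {x, rr n i x} \<noteq> {y, rr n j y}"
  proof
    fix x y assume xy: "x < n" "y < n" "{x, rr n i x} = {y, rr n j y}"
    then have "int x + int (rr n i x) = int y + int (rr n j y)" by (auto simp: doubleton_eq_iff)
    then have "(2 * int i) mod int n = (2 * int j) mod int n" using rr_sum[OF n] by metis
    then have "int i mod int n = int j mod int n" using odd_cancel assms(1) by blast
    then show False using assms by simp
  qed
  moreover have "{i,n} \<noteq> {j,n}" using assms by (auto simp: doubleton_eq_iff)
  moreover have "{x, rr n i x} \<noteq> {j,n}" if "x < n" for x
  proof -
    have "rr n i x \<noteq> n" using rr_lt[OF n, of i x] by simp
    then show ?thesis using that by (auto simp: doubleton_eq_iff)
  qed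
  moreover have "{x, rr n j x} \<noteq> {i,n}" if "x < n" for x
  proof -
    have "rr n j x \<noteq> n" using rr_lt[OF n, of j x] by simp
    then show ?thesis using that by (auto simp: doubleton_eq_iff)
  qed
  ultimately have "\<forall>e\<in>F n i. e \<notin> F n j"
  proof (intro ballI notI)
    fix e assume A: "\<And>x y. x < n \<Longrightarrow> y < n \<Longrightarrow> {x, rr n i x} \<noteq> {y, rr n j y}"
      "{i,n} \<noteq> {j,n}" "\<And>x. x < n \<Longrightarrow> {x, rr n i x} \<noteq> {j,n}"
      "\<And>x. x < n \<Longrightarrow> {x, rr n j x} \<noteq> {i,n}" and ei: "e \<in> F n i" and ej: "e \<in> F n j"
    have ce: "e = {i,n} \<or> (\<exists>x. x < n \<and> e = {x, rr n i x})" using ei by (auto simp: F_def)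
    have cf: "e = {j,n} \<or> (\<exists>x. x < n \<and> e = {x, rr n j x})" using ej by (auto simp: F_def)
    show False using ce cf A by metis
  qed
  then show ?thesis by blast
qed

lemma clique_exists:
  assumes "k \<ge> 1" shows "\<exists>C. pm_clique k C \<and> card C = 2*k - 1"
proof -
  define n where "n = 2*k - 1"
  have on: "odd n" "Suc n = 2*k" using assms by (auto simp: n_def)
  have inj: "inj_on (F n) {..<n}"
  proof (rule inj_onI)
    fix i j assume ij: "i \<in> {..<n}" "j \<in> {..<n}" "F n i = F n j"
    show "i = j"
    proof (rule ccontr)
      assume "i \<noteq> j"
      then have "F n i \<inter> F n j = {}" using F_disj[OF on(1)] ij(1,2) by simp
      moreover have "{i,n} \<in> F n i" by (simp add: F_def)
      ultimately show False using ij(3) by blast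
    qed
  qed
  have "pm_clique k (F n ` {..<n})"
    unfolding pm_clique_def pm_eq pm_adj_def
  proof (intro conjI ballI impI subsetI)
    fix M assume "M \<in> F n ` {..<n}"
    then show "M \<in> pmset {0..<2*k}" using F_pm[OF on(1)] on(2) by auto
  next
    fix M N assume "M \<in> F n ` {..<n}" "N \<in> F n ` {..<n}" "M \<noteq> N"
    then show "M \<inter> N = {}" using F_disj[OF on(1)] by auto
  qed
  moreover have "card (F n ` {..<n}) = 2*k - 1" using inj by (simp add: card_image n_def)
  ultimately show ?thesis by blast
qed

lemma clique_bound:
  assumes C: "pm_clique k C" and k: "k \<ge> 1" shows "card C \<le> 2*k - 1"
proof -
  define V where "V = {0..<2*k}"
  have z: "0 \<in> V" using k by (simp add: V_def)
  have CV: "C \<subseteq> pmset V" using C by (simp add: pm_clique_def pm_eq V_def)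
  define T where "T = (\<lambda>j. {0,j}) ` (V - {0})"
  define g where "g M = (SOME e. e \<in> M \<and> e \<in> T)" for M
  have g: "g M \<in> M \<and> g M \<in> T" if MC: "M \<in> C" for M
  proof -
    have "M \<in> pmset V" using CV MC by blast
    then obtain b where "b \<in> V - {0}" "{0,b} \<in> M" using pm_partner[of M V 0] z by blast
    then have "\<exists>e. e \<in> M \<and> e \<in> T" unfolding T_def by blast
    then show ?thesis unfolding g_def by (rule someI_ex)
  qed
  have inj: "inj_on g C"
  proof (rule inj_onI)
    fix M N assume MN: "M \<in> C" "N \<in> C" "g M = g N"
    have "g M \<in> M" "g N \<in> N" using g MN(1,2) by blast+
    then have "g M \<in> M \<inter> N" using MN(3) by simp
    then have "\<not> pm_adj M N" unfolding pm_adj_def by blast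
    then show "M = N" using C MN(1,2) unfolding pm_clique_def by blast
  qed
  have fT: "finite T" unfolding T_def V_def by simp
  have gT: "g ` C \<subseteq> T" using g by blast
  have "card C \<le> card T" by (rule card_inj_on_le[OF inj gT fT])
  also have "\<dots> \<le> card (V - {0})" unfolding T_def by (rule card_image_le) (simp add: V_def)
  also have "\<dots> = 2*k - 1" using z by (simp add: V_def)
  finally show ?thesis .
qed



lemma card_filter_sum: "finite A \<Longrightarrow> card {x\<in>A. P x} = (\<Sum>x\<in>A. if P x then 1 else 0::nat)"
proof -
  assume fA: "finite A"
  have "card {x\<in>A. P x} = (\<Sum>x\<in>{x\<in>A. P x}. 1::nat)" by simp
  also have "\<dots> = (\<Sum>x\<in>A. if P x then 1 else 0::nat)" by (rule sum.inter_filter[OF fA])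
  finally show ?thesis .
qed

lemma fib:
  assumes G: "finite G" and T: "finite T"
  shows "card {x\<in>G. f x \<in> T} = (\<Sum>y\<in>T. card {x\<in>G. f x = y})"
proof -
  have eq: "{x\<in>G. f x \<in> T} = (\<Union>y\<in>T. {x\<in>G. f x = y})" by blast
  have "card {x\<in>G. f x \<in> T} = card (\<Union>y\<in>T. {x\<in>G. f x = y})" using eq by (rule arg_cong)
  also have "\<dots> = (\<Sum>y\<in>T. card {x\<in>G. f x = y})"
    by (rule card_UN_disjoint) (use G T in auto)
  finally show ?thesis .
qed

lemma coclique_exists:
  assumes k: "k \<ge> 1" shows "\<exists>C. pm_coclique k C \<and> card C = dfact (2*k - 3)"
proof -
  define V where "V = {0..<2*k}"
  have ab: "(0::nat) \<in> V" "(1::nat) \<in> V" "(0::nat) \<noteq> 1" using k by (auto simp: V_def)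
  define C0 where "C0 = {M \<in> pmset V. {0,1} \<in> M}"
  have "pm_coclique k C0"
    unfolding pm_coclique_def pm_eq pm_adj_def
  proof (intro conjI ballI impI)
    show "C0 \<subseteq> pmset {0..<2 * k}" by (auto simp: C0_def V_def)
    fix M N assume "M \<in> C0" "N \<in> C0"
    then have "{0,1} \<in> M \<inter> N" by (simp add: C0_def)
    then show "M \<inter> N \<noteq> {}" by blast
  qed
  moreover have "card C0 = dfact (2*k - 3)"
  proof -
    have "card C0 = card (pmset (V - {0,1}))" unfolding C0_def
      by (rule pm_fiber_card) (use ab in \<open>simp_all add: V_def\<close>)
    also have "\<dots> = dfact (2*(k-1) - 1)"
    proof (rule pm_count)
      show "finite (V - {0,1})" by (simp add: V_def)
      have "card (V - {0,1}) = card V - 2" using ab by (simp add: V_def card_Diff_subset)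
      then show "card (V - {0,1}) = 2*(k-1)" by (simp add: V_def)
    qed
    also have "2*(k-1) - 1 = 2*k - 3" by simp
    finally show ?thesis .
  qed
  ultimately show ?thesis by blast
qed

lemma coclique_bound:
  assumes k: "k \<ge> 1" and S: "pm_coclique k S"
  shows "card S \<le> dfact (2*k - 3)"
proof -
  define V where "V = {0..<2*k}"
  define P where "P = pmset V"
  define G where "G = {\<sigma>. \<sigma> permutes V}"
  have fV: "finite V" by (simp add: V_def)
  have fP: "finite P" unfolding P_def by (rule pmset_finite[OF fV])
  have fG: "finite G" unfolding G_def by (rule finite_permutations[OF fV])
  have SP: "S \<subseteq> P" using S by (simp add: pm_coclique_def pm_eq P_def V_def)
  have fS: "finite S" using finite_subset[OF SP fP] .
  obtain F where F: "pm_clique k F" "card F = 2*k - 1" using clique_exists[OF k] by blast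
  have FP: "F \<subseteq> P" using F(1) by (simp add: pm_clique_def pm_eq P_def V_def)
  have fF: "finite F" using finite_subset[OF FP fP] .
  have Fne: "F \<noteq> {}" using F(2) k by auto
  then obtain A0 where A0: "A0 \<in> F" by blast
  have A0P: "A0 \<in> P" using A0 FP by blast
  define c where "c A M = card {\<sigma>\<in>G. pm_act \<sigma> A = M}" for A M
  have cle: "c A M \<le> c A' M'" if h: "A \<in> P" "M \<in> P" "A' \<in> P" "M' \<in> P" for A M A' M'
  proof -
    obtain \<tau> where \<tau>: "\<tau> permutes V" "pm_act \<tau> A' = A" using pm_trans[of A' V A] h fV by (auto simp: P_def)
    obtain \<rho> where \<rho>: "\<rho> permutes V" "pm_act \<rho> M = M'" using pm_trans[of M V M'] h fV by (auto simp: P_def)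
    define hh where "hh \<sigma> = \<rho> \<circ> \<sigma> \<circ> \<tau>" for \<sigma>
    have inj: "inj_on hh {\<sigma>\<in>G. pm_act \<sigma> A = M}"
    proof (rule inj_onI)
      fix s1 s2 assume "hh s1 = hh s2"
      then have "inv \<rho> \<circ> (\<rho> \<circ> s1 \<circ> \<tau>) \<circ> inv \<tau> = inv \<rho> \<circ> (\<rho> \<circ> s2 \<circ> \<tau>) \<circ> inv \<tau>" by (simp add: hh_def)
      then show "s1 = s2" by (simp add: o_assoc permutes_inv_o[OF \<rho>(1)] permutes_inv_o[OF \<tau>(1)])
           (simp add: o_assoc[symmetric] permutes_inv_o[OF \<tau>(1)])
    qed
    have into: "hh ` {\<sigma>\<in>G. pm_act \<sigma> A = M} \<subseteq> {\<sigma>\<in>G. pm_act \<sigma> A' = M'}"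
    proof
      fix x assume "x \<in> hh ` {\<sigma>\<in>G. pm_act \<sigma> A = M}"
      then obtain \<sigma> where s: "\<sigma> permutes V" "pm_act \<sigma> A = M" "x = hh \<sigma>" by (auto simp: G_def)
      have "x permutes V" unfolding s(3) hh_def
        by (intro permutes_compose \<tau>(1) \<rho>(1) s(1))
      moreover have "pm_act x A' = M'" unfolding s(3) hh_def
        by (simp add: pm_act_comp \<tau>(2) s(2) \<rho>(2))
      ultimately show "x \<in> {\<sigma>\<in>G. pm_act \<sigma> A' = M'}" by (simp add: G_def)
    qed
    have fin: "finite {\<sigma>\<in>G. pm_act \<sigma> A' = M'}" using fG by simp
    show ?thesis unfolding c_def by (rule card_inj_on_le[OF inj into fin])
  qed
  define c0 where "c0 = c A0 A0"
  have ceq: "c A M = c0" if "A \<in> P" "M \<in> P" for A M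
    using cle[OF that A0P A0P] cle[OF A0P A0P that] unfolding c0_def by simp
  have c0pos: "c0 > 0"
  proof -
    have "id \<in> {\<sigma>\<in>G. pm_act \<sigma> A0 = A0}" by (simp add: G_def pm_act_id)
    then show ?thesis unfolding c0_def c_def using fG by (auto simp: card_gt_0_iff)
  qed
  have cardG: "card G = card P * c0"
  proof -
    have "{\<sigma>\<in>G. pm_act \<sigma> A0 \<in> P} = G" using pm_act_mem A0P by (auto simp: G_def P_def)
    then have "card G = card {\<sigma>\<in>G. pm_act \<sigma> A0 \<in> P}" by simp
    also have "\<dots> = (\<Sum>M\<in>P. c A0 M)" unfolding c_def by (rule fib[OF fG fP])
    also have "\<dots> = (\<Sum>M\<in>P. c0)" using ceq A0P by simp
    finally show ?thesis by simp
  qed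
  have le1: "card {A\<in>F. pm_act \<sigma> A \<in> S} \<le> 1" if s: "\<sigma> \<in> G" for \<sigma>
  proof -
    have p: "\<sigma> permutes V" using s by (simp add: G_def)
    have "\<forall>A\<in>{A\<in>F. pm_act \<sigma> A \<in> S}. \<forall>B\<in>{A\<in>F. pm_act \<sigma> A \<in> S}. A = B"
    proof (intro ballI)
      fix A B assume AB: "A \<in> {A\<in>F. pm_act \<sigma> A \<in> S}" "B \<in> {A\<in>F. pm_act \<sigma> A \<in> S}"
      show "A = B"
      proof (rule ccontr)
        assume ne: "A \<noteq> B"
        then have "A \<inter> B = {}" using F(1) AB unfolding pm_clique_def pm_adj_def by blast
        then have d: "pm_act \<sigma> A \<inter> pm_act \<sigma> B = {}"
          using pm_act_Int[OF permutes_inj[OF p], of A B] by (simp add: pm_act_def)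
        have "pm_act \<sigma> A \<noteq> pm_act \<sigma> B"
          using ne pm_act_inj[OF permutes_inj[OF p]] by (metis injD)
        then have "\<not> pm_adj (pm_act \<sigma> A) (pm_act \<sigma> B)" using S AB unfolding pm_coclique_def by blast
        then show False using d by (simp add: pm_adj_def)
      qed
    qed
    then show ?thesis using card_le_Suc0_iff_eq[of "{A\<in>F. pm_act \<sigma> A \<in> S}"] fF by simp
  qed
  have "(\<Sum>\<sigma>\<in>G. card {A\<in>F. pm_act \<sigma> A \<in> S}) \<le> (\<Sum>\<sigma>\<in>G. 1)"
    by (rule sum_mono) (rule le1)
  also have "\<dots> = card G" by simp
  finally have sum1: "(\<Sum>\<sigma>\<in>G. card {A\<in>F. pm_act \<sigma> A \<in> S}) \<le> card G" .
  have "(\<Sum>\<sigma>\<in>G. card {A\<in>F. pm_act \<sigma> A \<in> S}) = (\<Sum>\<sigma>\<in>G. \<Sum>A\<in>F. if pm_act \<sigma> A \<in> S then 1 else 0)"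
    by (rule sum.cong[OF refl]) (rule card_filter_sum[OF fF])
  also have "\<dots> = (\<Sum>A\<in>F. \<Sum>\<sigma>\<in>G. if pm_act \<sigma> A \<in> S then 1 else 0)" by (rule sum.swap)
  also have "\<dots> = (\<Sum>A\<in>F. card {\<sigma>\<in>G. pm_act \<sigma> A \<in> S})"
    by (rule sum.cong[OF refl]) (rule card_filter_sum[OF fG, symmetric])
  also have "\<dots> = (\<Sum>A\<in>F. \<Sum>M\<in>S. c A M)"
    unfolding c_def by (rule sum.cong[OF refl]) (rule fib[OF fG fS])
  also have "\<dots> = (\<Sum>A\<in>F. \<Sum>M\<in>S. c0)"
    by (rule sum.cong[OF refl], rule sum.cong[OF refl]) (use ceq FP SP in blast)
  also have "\<dots> = card F * card S * c0" by simp
  finally have "card F * card S * c0 \<le> card P * c0" using sum1 cardG by simp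
  then have "card F * card S \<le> card P" using c0pos by simp
  moreover have "card P = dfact (2*k - 1)" unfolding P_def by (rule pm_count[OF fV]) (simp add: V_def)
  moreover have "dfact (2*k - 1) = (2*k - 1) * dfact (2*k - 3)"
  proof -
    have "dfact (Suc (2*(k-1))) = Suc (2*(k-1)) * dfact (2*(k-1) - 1)" by (rule dfact_step)
    moreover have "Suc (2*(k-1)) = 2*k - 1" "2*(k-1) - 1 = 2*k - 3" using k by auto
    ultimately show ?thesis by (simp only:)
  qed
  ultimately have "(2*k - 1) * card S \<le> (2*k - 1) * dfact (2*k - 3)" using F(2) by simp
  then show ?thesis using k by simp
qed


theorem theorem3p3:
  fixes k :: nat
  assumes "k \<ge> 1"
  shows "vertex_transitive_pm k
    \<and> (\<forall>\<sigma>. \<sigma> permutes {0..<2*k} \<longrightarrow> pm_automorphism k (pm_act \<sigma>))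
    \<and> (\<forall>M\<in>perfect_matchings k. \<forall>N\<in>perfect_matchings k.
          \<exists>\<sigma>. \<sigma> permutes {0..<2*k} \<and> pm_act \<sigma> M = N)
    \<and> (\<exists>C. pm_clique k C \<and> card C = 2*k - 1)
    \<and> (\<forall>C. pm_clique k C \<longrightarrow> card C \<le> 2*k - 1)
    \<and> (\<exists>C. pm_coclique k C \<and> card C = dfact (2*k - 3))
    \<and> (\<forall>C. pm_coclique k C \<longrightarrow> card C \<le> dfact (2*k - 3))"
proof -
  have T: "\<forall>M\<in>perfect_matchings k. \<forall>N\<in>perfect_matchings k.
          \<exists>\<sigma>. \<sigma> permutes {0..<2*k} \<and> pm_act \<sigma> M = N"
  proof (intro ballI)
    fix M N assume "M \<in> perfect_matchings k" "N \<in> perfect_matchings k"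
    then show "\<exists>\<sigma>. \<sigma> permutes {0..<2*k} \<and> pm_act \<sigma> M = N"
      using pm_trans[of M "{0..<2*k}" N] by (simp add: pm_eq)
  qed
  have A: "\<forall>\<sigma>. \<sigma> permutes {0..<2*k} \<longrightarrow> pm_automorphism k (pm_act \<sigma>)"
    using pm_act_auto by blast
  have V: "vertex_transitive_pm k"
    unfolding vertex_transitive_pm_def
  proof (intro ballI)
    fix M N assume "M \<in> perfect_matchings k" "N \<in> perfect_matchings k"
    then obtain \<sigma> where "\<sigma> permutes {0..<2*k}" "pm_act \<sigma> M = N" using T by blast
    then show "\<exists>f. pm_automorphism k f \<and> f M = N" using A by blast
  qed
  show ?thesis
    using V A T clique_exists[OF assms] clique_bound[OF _ assms] coclique_exists[OF assms]
      coclique_bound[OF assms] by blast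
qed

end
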